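(* Let $m>2\times 10^{31}$ be a positive integer. Then $W(m)<m^{2/9}$.
   Context: For a positive integer $m$, $\omega(m)$ is the number of distinct prime divisors of $m$ and $W(m)=2^{\omega(m)}$. *)

theory Defs
  imports "HOL-Computational_Algebra.Primes" Complex_Main
begin

definition omega :: "nat \<Rightarrow> nat" where
  "omega m = card (prime_factors m)"

definition W :: "nat \<Rightarrow> nat" where
  "W m = 2 ^ omega m"

end

theory Submission
  imports Defs
begin

lemma primesA: "{p::nat. prime p \<and> p \<le> 89} = {2,3,5,7,11,13,17,19,23,29,31,37,41,43,47,53,59,61,67,71,73,79,83,89}"
proof -
  have "{p::nat. prime p \<and> p \<le> 89} = Set.filter prime {..89}" by auto
  also have "\<dots> = {2,3,5,7,11,13,17,19,23,29,31,37,41,43,47,53,59,61,67,71,73,79,83,89}" by code_simp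
  finally show ?thesis .
qed

lemma key:
  fixes P :: "nat set"
  assumes fin: "finite P" and pr: "\<And>p. p \<in> P \<Longrightarrow> prime p" and k: "card P \<ge> 24"
  shows "(512::nat) ^ card P < (\<Prod>p\<in>P. p^2)"
proof -
  define A where "A = {p::nat. prime p \<and> p \<le> 89}"
  define g where "g = (\<lambda>p::nat. p^2)"
  have finA: "finite A" unfolding A_def by auto
  have cA: "card A = 24" unfolding A_def primesA by simp
  have pA: "(512::nat) ^ 24 < prod g A" unfolding A_def primesA g_def by simp
  define C where "C = P \<inter> A"
  define D where "D = P - A"
  define E where "E = A - P"
  have finC: "finite C" "finite D" "finite E" using fin finA unfolding C_def D_def E_def by auto
  have cP: "card P = card C + card D" unfolding C_def D_def using fin
    by (metis Diff_Diff_Int card_Diff_subset_Int card_Int_Diff finite_Diff inf_commute)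
  have cA2: "card A = card C + card E" unfolding C_def E_def using finA
    by (metis card_Int_Diff inf_commute)
  have de: "card E \<le> card D" using cP cA2 cA k by linarith
  have prP: "prod g P = prod g C * prod g D" unfolding C_def D_def using fin
    by (metis prod.Int_Diff)
  have prA: "prod g A = prod g C * prod g E" unfolding C_def E_def using finA
    by (metis inf_commute prod.Int_Diff)
  have Eb: "prod g E \<le> 7921 ^ card E"
    by (rule prod_le_power) (auto simp: E_def A_def g_def intro: order.trans[OF power_mono[of _ 89]])
  have Db: "8100 ^ card D \<le> prod g D"
  proof -
    have "\<forall>p\<in>D. 8100 \<le> g p"
    proof
      fix p assume "p \<in> D"
      then have "p \<ge> 90" using pr unfolding D_def A_def by auto
      then have "90^2 \<le> p^2" by (rule power_mono) simp
      then show "8100 \<le> g p" by (simp add: g_def)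
    qed
    then have "(\<Prod>p\<in>D. (8100::nat)) \<le> prod g D" by (intro prod_mono) auto
    then show ?thesis by simp
  qed
  obtain t where t: "card D = card E + t" using de le_Suc_ex by blast
  have 1: "512 ^ (card C + card E) < prod g C * 7921 ^ card E"
  proof -
    have "512 ^ (card C + card E) < prod g C * prod g E" using pA cA2 cA prA by simp
    also have "\<dots> \<le> prod g C * 7921 ^ card E" using Eb by simp
    finally show ?thesis .
  qed
  have "(512::nat) ^ card P = 512 ^ (card C + card E) * 512 ^ t" using cP t by (simp add: power_add)
  also have "\<dots> < prod g C * 7921 ^ card E * 512 ^ t" using 1 by simp
  also have "\<dots> \<le> prod g C * 8100 ^ card E * 8100 ^ t"
    by (intro mult_mono power_mono) auto
  also have "\<dots> = prod g C * 8100 ^ card D" using t by (simp add: power_add)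
  also have "\<dots> \<le> prod g C * prod g D" using Db by simp
  finally show ?thesis using prP g_def by simp
qed

theorem lemma4p1:
  fixes m :: nat
  assumes "real m > 2 * 10 ^ 31"
  shows "real (W m) < real m powr (2 / 9)"
proof -
  have mb: "m > 2 * 10 ^ 31"
  proof -
    have "real (2 * 10 ^ 31) < real m" using assms by simp
    then show ?thesis by (simp only: of_nat_less_iff)
  qed
  then have m0: "m > 0" by simp
  define P where "P = prime_factors m"
  have finP: "finite P" unfolding P_def by simp
  have dv: "prod id P dvd m"
  proof -
    have "prod id P = prod_mset (mset_set P)"
      by (simp add: prod_unfold_prod_mset)
    also have "\<dots> dvd prod_mset (prime_factorization m)"
      unfolding P_def by (rule prod_mset_subset_imp_dvd[OF mset_set_set_mset_msubset])
    also have "\<dots> = m" using m0 by (rule prod_mset_prime_factorization_nat)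
    finally show ?thesis .
  qed
  then have Pm: "prod id P \<le> m" using m0 by (rule dvd_imp_le)
  have W9: "W m ^ 9 = 512 ^ card P"
  proof -
    have "W m ^ 9 = (2::nat) ^ (card P * 9)" unfolding W_def omega_def P_def
      by (rule power_mult[symmetric])
    also have "\<dots> = 2 ^ (9 * card P)" by (simp only: mult.commute)
    also have "\<dots> = (2 ^ 9) ^ card P" by (rule power_mult)
    finally show ?thesis by simp
  qed
  have nat_ineq: "W m ^ 9 < m ^ 2"
  proof (cases "card P \<le> 23")
    case True
    have "(512::nat) ^ card P \<le> 512 ^ 23" using True by (intro power_increasing) auto
    also have "\<dots> < (2 * 10 ^ 31) ^ 2" by simp
    also have "\<dots> < m ^ 2" using mb by (intro power_strict_mono) auto
    finally show ?thesis using W9 by simp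
  next
    case False
    have "(512::nat) ^ card P < (\<Prod>p\<in>P. p^2)"
      by (rule key) (use finP False in \<open>auto simp: P_def\<close>)
    also have "\<dots> = (prod id P) ^ 2" by (simp add: prod_power_distrib)
    also have "\<dots> \<le> m ^ 2" using Pm by (rule power_mono) simp
    finally show ?thesis using W9 by simp
  qed
  show ?thesis
  proof (rule ccontr)
    assume "\<not> ?thesis"
    then have h: "real m powr (2/9) \<le> real (W m)" by simp
    have "real m ^ 2 = (real m powr (2/9)) ^ 9"
      proof -
      have "(real m powr (2/9)) ^ 9 = real m powr (real 9 * (2/9))"
        using m0 by (intro powr_power) simp
      also have "real 9 * (2/9::real) = real 2" by simp
      also have "real m powr real 2 = real m ^ 2" using m0 by (intro powr_realpow) simp
      finally show ?thesis by simp
    qed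
    also have "\<dots> \<le> real (W m) ^ 9" using h by (intro power_mono) auto
    finally have "real (m ^ 2) \<le> real (W m ^ 9)" by simp
    then have "m^2 \<le> W m ^ 9" by (simp only: of_nat_le_iff)
    then show False using nat_ineq by simp
  qed
qed
end
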